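(* Let $I,J\in\mathbb C$ with $4I^3-J^2\ne0$. Then the affine subvariety $Z_{I,J}$ of $\mathbb A^5_{\mathbb C}$ (with coordinates $a,b,c,d,e$) defined by \[ I=12ae-3bd+c^2,\qquad J=72ace+9bcd-27ad^2-27b^2e-2c^3 \] contains no lines, i.e. there is no set $\{(\alpha,\beta,\gamma,\delta,\epsilon)+t(A,B,C,D,E): t\in\mathbb C\}$ with $(\alpha,\beta,\gamma,\delta,\epsilon)\in\mathbb C^5$ and $(A,B,C,D,E)\in\mathbb C^5\setminus\{\mathbf 0\}$ contained in $Z_{I,J}$. *)

theory Defs
  imports Complex_Main
begin

type_synonym pt5 = "complex \<times> complex \<times> complex \<times> complex \<times> complex"

definition invI :: "pt5 \<Rightarrow> complex" where
  "invI p = (case p of (a,b,c,d,e) \<Rightarrow> 12*a*e - 3*b*d + c^2)"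

definition invJ :: "pt5 \<Rightarrow> complex" where
  "invJ p = (case p of (a,b,c,d,e) \<Rightarrow>
     72*a*c*e + 9*b*c*d - 27*a*d^2 - 27*b^2*e - 2*c^3)"

definition Zvar :: "complex \<Rightarrow> complex \<Rightarrow> pt5 set" where
  "Zvar I J = {p. invI p = I \<and> invJ p = J}"

definition line5 :: "pt5 \<Rightarrow> pt5 \<Rightarrow> pt5 set" where
  "line5 P V = (case P of (\<alpha>,\<beta>,\<gamma>,\<delta>,\<epsilon>) \<Rightarrow> case V of (A,B,C,D,E) \<Rightarrow>
     {(\<alpha> + t*A, \<beta> + t*B, \<gamma> + t*C, \<delta> + t*D, \<epsilon> + t*E) | t. True})"

end

theory Submission
  imports Defs
begin

definition pl :: "pt5 \<Rightarrow> pt5 \<Rightarrow> complex \<Rightarrow> pt5" where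
  "pl P V t = (case P of (a,b,c,d,e) \<Rightarrow> case V of (A,B,C,D,E) \<Rightarrow>
     (a + t*A, b + t*B, c + t*C, d + t*D, e + t*E))"

definition okL :: "complex \<Rightarrow> complex \<Rightarrow> pt5 \<Rightarrow> pt5 \<Rightarrow> bool" where
  "okL I J P V = (\<forall>t. invI (pl P V t) = I \<and> invJ (pl P V t) = J)"

definition sh :: "complex \<Rightarrow> pt5 \<Rightarrow> pt5" where
  "sh l p = (case p of (a,b,c,d,e) \<Rightarrow> (a, 4*a*l+b, 6*a*l^2+3*b*l+c,
      4*a*l^3+3*b*l^2+2*c*l+d, a*l^4+b*l^3+c*l^2+d*l+e))"

definition sw :: "pt5 \<Rightarrow> pt5" where
  "sw p = (case p of (a,b,c,d,e) \<Rightarrow> (e,d,c,b,a))"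

lemma sh_invI: "invI (sh l p) = invI p"
  by (cases p) (simp add: sh_def invI_def algebra_simps power2_eq_square power3_eq_cube power4_eq_xxxx)

lemma sh_invJ: "invJ (sh l p) = invJ p"
  by (cases p) (simp add: sh_def invJ_def algebra_simps power2_eq_square power3_eq_cube power4_eq_xxxx)

lemma sw_invI: "invI (sw p) = invI p"
  by (cases p) (simp add: sw_def invI_def algebra_simps)

lemma sw_invJ: "invJ (sw p) = invJ p"
  by (cases p) (simp add: sw_def invJ_def algebra_simps power2_eq_square)

lemma sh_pl: "sh l (pl P V t) = pl (sh l P) (sh l V) t"
  by (cases P; cases V) (simp add: sh_def pl_def algebra_simps)

lemma sw_pl: "sw (pl P V t) = pl (sw P) (sw V) t"
  by (cases P; cases V) (simp add: sw_def pl_def)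

lemma okL_sh: "okL I J P V \<Longrightarrow> okL I J (sh l P) (sh l V)"
  unfolding okL_def by (metis sh_pl sh_invI sh_invJ)

lemma okL_sw: "okL I J P V \<Longrightarrow> okL I J (sw P) (sw V)"
  unfolding okL_def by (metis sw_pl sw_invI sw_invJ)

lemma okL_V:
  assumes "okL I J P V" shows "invI V = 0 \<and> invJ V = 0"
proof -
  obtain a b c d e where P: "P = (a,b,c,d,e)" by (cases P) auto
  obtain A B C D E where V: "V = (A,B,C,D,E)" by (cases V) auto
  have h: "\<And>t. invI (pl P V t) = I \<and> invJ (pl P V t) = J" using assms okL_def by blast
  have i1: "invI (pl P V 1) + invI (pl P V (-1)) - 2 * invI (pl P V 0) = 2 * invI V"
    unfolding P V pl_def invI_def by (simp add: algebra_simps power2_eq_square)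
  have j1: "invJ (pl P V 2) - invJ (pl P V (-2)) - 2 * (invJ (pl P V 1) - invJ (pl P V (-1))) = 12 * invJ V"
    unfolding P V pl_def invJ_def by (simp add: algebra_simps power2_eq_square power3_eq_cube)
  show ?thesis using i1 j1 h by simp
qed


lemma base:
  assumes "okL I J (a,b,c,d,e) (A,B,0,0,0)" and "A \<noteq> 0 \<or> B \<noteq> 0"
  shows "4 * I^3 - J^2 = 0"
proof -
  let ?P = "(a,b,c,d,e)" and ?V = "(A,B,0,0,0) :: pt5"
  have h: "\<And>t. invI (pl ?P ?V t) = I \<and> invJ (pl ?P ?V t) = J" using assms okL_def by blast
  have i1: "invI (pl ?P ?V 1) - invI (pl ?P ?V 0) = 12*A*e - 3*B*d"
    unfolding pl_def invI_def by (simp add: algebra_simps power2_eq_square)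
  have j2: "invJ (pl ?P ?V 1) + invJ (pl ?P ?V (-1)) - 2 * invJ (pl ?P ?V 0) = -54*B^2*e"
    unfolding pl_def invJ_def by (simp add: algebra_simps power2_eq_square power3_eq_cube)
  have j1: "invJ (pl ?P ?V 1) - invJ (pl ?P ?V (-1)) = 2*(72*A*c*e + 9*B*c*d - 27*A*d^2 - 54*B*b*e)"
    unfolding pl_def invJ_def by (simp add: algebra_simps power2_eq_square power3_eq_cube)
  have I0: "I = 12*a*e - 3*b*d + c^2" using h[of 0] unfolding pl_def invI_def by simp
  have J0: "J = 72*a*c*e + 9*b*c*d - 27*a*d^2 - 27*b^2*e - 2*c^3" using h[of 0] unfolding pl_def invJ_def by simp
  have e1: "12*A*e - 3*B*d = 0" using i1 h by simp
  have e2: "B^2*e = 0" using j2 h by simp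
  have "2*(72*A*c*e + 9*B*c*d - 27*A*d^2 - 54*B*b*e) = 0" using j1 h by simp
  then have e3: "72*A*c*e + 9*B*c*d - 27*A*d^2 - 54*B*b*e = 0" by (metis mult_eq_0_iff zero_neq_numeral)
  have "e = 0 \<and> d = 0"
  proof (cases "B = 0")
    case True
    then have "A \<noteq> 0" using assms(2) by simp
    with e1 True have "e = 0" by simp
    with e3 True \<open>A \<noteq> 0\<close> show ?thesis by simp
  next
    case False
    with e2 have "e = 0" by simp
    with e1 False show ?thesis by simp
  qed
  then show ?thesis using I0 J0 by (simp add: algebra_simps power2_eq_square power3_eq_cube)
qed


lemma base': "okL I J P (A,B,0,0,0) \<Longrightarrow> A \<noteq> 0 \<or> B \<noteq> 0 \<Longrightarrow> 4 * I^3 - J^2 = 0"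
  by (cases P) (metis base)

lemma caseB:
  assumes ok: "okL I J P (0,B,C,D,E)" and B: "B \<noteq> 0"
  shows "4 * I^3 - J^2 = 0"
proof -
  have V: "invI (0,B,C,D,E) = 0" "invJ (0,B,C,D,E) = 0" using okL_V[OF ok] by auto
  have iv: "C^2 - 3*B*D = 0" using V(1) by (simp add: invI_def)
  have jv: "9*B*C*D - 27*B^2*E - 2*C^3 = 0" using V(2) by (simp add: invJ_def)
  obtain r where r: "3*B*r = -C" using B
    by (metis divide_cancel_left mult.commute nonzero_mult_div_cancel_left zero_neq_numeral mult_eq_0_iff times_divide_eq_right)
  have c': "3*B*r + C = 0" using r by simp
  have "3*B*(3*B*r^2 + 2*C*r + D) = 0"
  proof -
    have "3*B*(3*B*r^2 + 2*C*r + D) = (3*B*r)^2 + 2*C*(3*B*r) + 3*B*D"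
      by (simp add: algebra_simps power2_eq_square)
    also have "\<dots> = 0" using r iv by (simp add: algebra_simps power2_eq_square)
    finally show ?thesis .
  qed
  then have d': "3*B*r^2 + 2*C*r + D = 0" using B by simp
  have "27*B^2*(B*r^3 + C*r^2 + D*r + E) = 0"
  proof -
    have "27*B^2*(B*r^3 + C*r^2 + D*r + E) = (3*B*r)^3 + 3*C*(3*B*r)^2 + 9*B*D*(3*B*r) + 27*B^2*E"
      by (simp add: algebra_simps power2_eq_square power3_eq_cube)
    also have "\<dots> = 0" using r jv by (simp add: algebra_simps power2_eq_square power3_eq_cube)
    finally show ?thesis .
  qed
  then have e': "B*r^3 + C*r^2 + D*r + E = 0" using B by simp
  have "okL I J (sh r P) (sh r (0,B,C,D,E))" by (rule okL_sh[OF ok])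
  moreover have "sh r (0,B,C,D,E) = (0,B,0,0,0)"
    using c' d' e' by (simp add: sh_def)
  ultimately show ?thesis using base' B by metis
qed


lemma caseA0:
  assumes ok: "okL I J P (A,0,C,D,E)" and A: "A \<noteq> 0"
  shows "4 * I^3 - J^2 = 0"
proof -
  have V: "invI (A,0,C,D,E) = 0" "invJ (A,0,C,D,E) = 0" using okL_V[OF ok] by auto
  have iv: "12*A*E + C^2 = 0" using V(1) by (simp add: invI_def)
  have jv0: "72*A*C*E - 27*A*D^2 - 2*C^3 = 0" using V(2) by (simp add: invJ_def)
  have eq: "27*A*D^2 + 8*C^3 = 6*C*(12*A*E + C^2) - (72*A*C*E - 27*A*D^2 - 2*C^3)"
    by (simp add: algebra_simps power2_eq_square power3_eq_cube)
  have jv: "27*A*D^2 + 8*C^3 = 0" unfolding eq iv jv0 by simp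
  show ?thesis
  proof (cases "C = 0")
    case True
    with jv A have "D = 0" by simp
    moreover from True iv A have "E = 0" by simp
    ultimately show ?thesis using ok True A base' by metis
  next
    case False
    obtain r where r: "4*C*r = -3*D" using False
      by (metis divide_cancel_left mult.commute nonzero_mult_div_cancel_left zero_neq_numeral mult_eq_0_iff times_divide_eq_right)
    have "16*C^2*(6*A*r^2 + C) = 0"
    proof -
      have "16*C^2*(6*A*r^2 + C) = 6*A*(4*C*r)^2 + 16*C^3"
        by (simp add: algebra_simps power2_eq_square power3_eq_cube)
      also have "\<dots> = 2*(27*A*D^2 + 8*C^3)" using r by (simp add: algebra_simps power2_eq_square power3_eq_cube)
      also have "\<dots> = 0" using jv by simp
      finally show ?thesis .
    qed
    then have c': "6*A*r^2 + 3*0*r + C = 0" using False by simp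
    have "16*C^3*(4*A*r^3 + 2*C*r + D) = 0"
    proof -
      have "16*C^3*(4*A*r^3 + 2*C*r + D) = A*(4*C*r)^3 + 8*C^3*(4*C*r) + 16*C^3*D"
        by (simp add: algebra_simps power2_eq_square power3_eq_cube)
      also have "\<dots> = -D*(27*A*D^2 + 8*C^3)" using r by (simp add: algebra_simps power2_eq_square power3_eq_cube)
      also have "\<dots> = 0" using jv by simp
      finally show ?thesis .
    qed
    then have d': "4*A*r^3 + 3*0*r^2 + 2*C*r + D = 0" using False by simp
    have "12*A*(256*C^4*(A*r^4 + C*r^2 + D*r + E)) = 0"
    proof -
      have "12*A*(256*C^4*(A*r^4 + C*r^2 + D*r + E)) =
            12*A*(A*(4*C*r)^4 + 16*C^3*(4*C*r)^2 + 64*C^3*D*(4*C*r) + 256*C^4*E)"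
        by (simp add: algebra_simps power2_eq_square power3_eq_cube power4_eq_xxxx)
      also have "\<dots> = 12*A*(81*A*D^4 - 48*C^3*D^2 + 256*C^4*E)"
        using r by (simp add: algebra_simps power2_eq_square power3_eq_cube power4_eq_xxxx)
      also have "\<dots> = 36*D^2*A*(27*A*D^2 + 8*C^3) - 32*C^3*(27*A*D^2 + 8*C^3) + 256*C^4*(12*A*E + C^2)"
        by (simp add: algebra_simps power2_eq_square power3_eq_cube power4_eq_xxxx)
      also have "\<dots> = 0" using jv iv by simp
      finally show ?thesis .
    qed
    then have e': "A*r^4 + 0*r^3 + C*r^2 + D*r + E = 0" using False A by simp
    have "okL I J (sh r P) (sh r (A,0,C,D,E))" by (rule okL_sh[OF ok])
    moreover have "sh r (A,0,C,D,E) = (A,4*A*r,0,0,0)"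
      using c' d' e' by (simp add: sh_def)
    ultimately show ?thesis using base' A by metis
  qed
qed

lemma okL_line:
  assumes "line5 P V \<subseteq> Zvar I J" shows "okL I J P V"
  unfolding okL_def
proof
  fix t
  obtain a b c d e where P: "P = (a,b,c,d,e)" by (cases P) auto
  obtain A B C D E where V: "V = (A,B,C,D,E)" by (cases V) auto
  have "pl P V t \<in> line5 P V" unfolding P V pl_def line5_def by auto
  then show "invI (pl P V t) = I \<and> invJ (pl P V t) = J" using assms Zvar_def by auto
qed

theorem theoremC1:
  fixes I J :: complex
  assumes "4 * I^3 - J^2 \<noteq> 0"
  shows "\<not> (\<exists>P V. V \<noteq> (0,0,0,0,0) \<and> line5 P V \<subseteq> Zvar I J)"
proof
  assume "\<exists>P V. V \<noteq> (0,0,0,0,0) \<and> line5 P V \<subseteq> Zvar I J"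
  then obtain P V where V0: "V \<noteq> (0,0,0,0,0)" and L: "line5 P V \<subseteq> Zvar I J" by blast
  obtain A B C D E where V: "V = (A,B,C,D,E)" by (cases V) auto
  have ok: "okL I J P (A,B,C,D,E)" using okL_line[OF L] V by simp
  have "4 * I^3 - J^2 = 0"
  proof (cases "A = 0")
    case A0: True
    show ?thesis
    proof (cases "B = 0")
      case True
      have "invI (A,B,C,D,E) = 0" using okL_V[OF ok] by auto
      then have "C = 0" using A0 True by (simp add: invI_def)
      have ok2: "okL I J (sw P) (E,D,0,0,0)" using okL_sw[OF ok] A0 True \<open>C = 0\<close> by (simp add: sw_def)
      have "E \<noteq> 0 \<or> D \<noteq> 0" using V0 V A0 True \<open>C = 0\<close> by auto
      then show ?thesis using base'[OF ok2] by simp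
    next
      case False
      then show ?thesis using caseB ok A0 by metis
    qed
  next
    case False
    have "okL I J (sh (-B/(4*A)) P) (sh (-B/(4*A)) (A,B,C,D,E))" by (rule okL_sh[OF ok])
    moreover have "\<exists>C' D' E'. sh (-B/(4*A)) (A,B,C,D,E) = (A,0,C',D',E')"
      using False by (simp add: sh_def)
    ultimately show ?thesis using caseA0 False by metis
  qed
  with assms show False by simp
qed

end
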